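(* Let $(q_n)_{n\geq1}$ be nonnegative reals with $\sum_{n\geq1}q_n=1$ and let $f(x)=\sum_{n\geq1}q_nx^n$ for $x\in[0,1]$. Let $k\geq1$ and let $(p_w)$ be reals in $[0,1]$ indexed by words $w$ over $\{0,1\}$ with $l(w)\leq k-1$. Define functions $f_w$ on $[0,1]$ for words of length at most $k$ by $f_\emptyset=f$ and $$f_{w1}(x)=f_w(p_wx+1-p_w)-f_w(1-p_w),\qquad f_{w0}(x)=f_w((1-p_w)x).$$ Define $\delta_\emptyset=1$, $\delta_{w0}=(1-p_w)\delta_w$, $\delta_{w1}=p_w\delta_w$, and $y_w=\sum_{v:\ l(v)=l(w),\ \#(v)<\#(w)}\delta_v$. Then for every word $w$ of length at most $k$ and every $x\in[0,1]$, $$f'_w(x)=\delta_w\,f'(y_w+\delta_wx).$$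
   Context: Words are finite sequences over $\{0,1\}$; $\emptyset$ is the empty word, $l(w)$ its length, $w0$, $w1$ denote appending a letter. $\#(w)$ is the integer whose binary representation is $w$, first letter most significant. Each $f_w$ is a power series with nonnegative coefficients converging on $[0,1]$; derivatives are the termwise differentiated series, whose value at $x=1$ is taken in $[0,+\infty]$. *)

theory Defs
  imports Complex_Main "HOL-Library.Extended_Nonnegative_Real"
begin

text \<open>Words over {0,1} are bool lists (False = 0, True = 1), first letter = head;
  appending a letter b to w is w @ [b].\<close>

definition num :: "bool list \<Rightarrow> nat" where
  "num w = foldl (\<lambda>acc b. 2 * acc + (if b then 1 else 0)) 0 w"

primrec fw_rev :: "(real \<Rightarrow> real) \<Rightarrow> (bool list \<Rightarrow> real) \<Rightarrow> bool list \<Rightarrow> real \<Rightarrow> real" where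
  "fw_rev f p [] = f"
| "fw_rev f p (b # rw) =
     (let g = fw_rev f p rw; pp = p (rev rw) in
      if b then (\<lambda>x. g (pp * x + 1 - pp) - g (1 - pp)) else (\<lambda>x. g ((1 - pp) * x)))"

definition fw :: "(real \<Rightarrow> real) \<Rightarrow> (bool list \<Rightarrow> real) \<Rightarrow> bool list \<Rightarrow> real \<Rightarrow> real" where
  "fw f p w = fw_rev f p (rev w)"

lemma fw_Nil: "fw f p [] = f" by (simp add: fw_def)
lemma fw_snoc1: "fw f p (w @ [True]) = (\<lambda>x. fw f p w (p w * x + 1 - p w) - fw f p w (1 - p w))"
  by (simp add: fw_def Let_def)
lemma fw_snoc0: "fw f p (w @ [False]) = (\<lambda>x. fw f p w ((1 - p w) * x))"
  by (simp add: fw_def Let_def)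

primrec delta_rev :: "(bool list \<Rightarrow> real) \<Rightarrow> bool list \<Rightarrow> real" where
  "delta_rev p [] = 1"
| "delta_rev p (b # rw) = (if b then p (rev rw) else 1 - p (rev rw)) * delta_rev p rw"

definition delta :: "(bool list \<Rightarrow> real) \<Rightarrow> bool list \<Rightarrow> real" where
  "delta p w = delta_rev p (rev w)"

lemma delta_Nil: "delta p [] = 1" by (simp add: delta_def)
lemma delta_snoc0: "delta p (w @ [False]) = (1 - p w) * delta p w" by (simp add: delta_def)
lemma delta_snoc1: "delta p (w @ [True]) = p w * delta p w" by (simp add: delta_def)

definition yw :: "(bool list \<Rightarrow> real) \<Rightarrow> bool list \<Rightarrow> real" where
  "yw p w = (\<Sum>v\<in>{v. length v = length w \<and> num v < num w}. delta p v)"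

text \<open>The (nonnegative) power series coefficients of a function given on [0,1]
  by a power series with nonnegative coefficients, and its termwise derivative,
  valued in [0,+\<infinity>].\<close>
definition ps_coeffs :: "(real \<Rightarrow> real) \<Rightarrow> nat \<Rightarrow> real" where
  "ps_coeffs g = (SOME c. (\<forall>n. 0 \<le> c n) \<and> (\<forall>x\<in>{0..1}. (\<lambda>n. c n * x ^ n) sums g x))"

definition ps_deriv :: "(real \<Rightarrow> real) \<Rightarrow> real \<Rightarrow> ennreal" where
  "ps_deriv g x = (\<Sum>n. ennreal (real (Suc n) * ps_coeffs g (Suc n) * x ^ n))"

end

theory Submission imports Defs "HOL-Analysis.Analysis" begin

lemma enn_suminf_head: "(\<Sum>n. f n :: ennreal) = f 0 + (\<Sum>n. f (Suc n))"
proof -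
  have "(\<lambda>n. f (Suc n)) sums (\<Sum>n. f (Suc n))" by (rule summable_sums[OF summableI])
  then have "f sums ((\<Sum>n. f (Suc n)) + f 0)" by (rule sums_Suc)
  then show ?thesis by (simp add: sums_unique[symmetric] add.commute)
qed

lemma enn_swap: "(\<Sum>i. \<Sum>j. f i j :: ennreal) = (\<Sum>j. \<Sum>i. f i j)"
proof -
  have "(\<Sum>j. \<Sum>i. f i j) = (\<integral>\<^sup>+j. (\<Sum>i. f i j) \<partial>count_space UNIV)"
    by (simp add: nn_integral_count_space_nat)
  also have "\<dots> = (\<Sum>i. \<integral>\<^sup>+j. f i j \<partial>count_space UNIV)"
    by (rule nn_integral_suminf) simp
  also have "\<dots> = (\<Sum>i. \<Sum>j. f i j)"
    by (simp add: nn_integral_count_space_nat)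
  finally show ?thesis ..
qed

lemma powser_coeffs_zero:
  fixes a :: "nat \<Rightarrow> real"
  assumes S: "\<And>x. 0 < x \<Longrightarrow> x < 1 \<Longrightarrow> (\<lambda>n. a n * x ^ n) sums 0"
  shows "a n = 0"
proof (induction n rule: less_induct)
  case (less n)
  have sh: "summable (\<lambda>m. a m * (1/2) ^ m)" using S[of "1/2"] sums_summable by auto
  have sh2: "summable (\<lambda>j. a (j + n) * (1/2) ^ j)"
  proof -
    have "summable (\<lambda>j. a (j + n) * (1/2) ^ (j + n))"
      using summable_ignore_initial_segment[OF sh, of n] by simp
    then have "summable (\<lambda>j. 2 ^ n * (a (j + n) * (1/2) ^ (j + n)))"
      by (rule summable_mult)
    moreover have "\<And>j. 2 ^ n * (a (j + n) * (1/2) ^ (j + n)) = a (j + n) * (1/2) ^ j"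
      by (simp add: power_add field_simps)
    ultimately show ?thesis by simp
  qed
  define g where "g x = (\<Sum>j. a (j + n) * x ^ j)" for x :: real
  have cont: "isCont g 0"
  proof -
    have "(g has_field_derivative (\<Sum>j. diffs (\<lambda>j. a (j+n)) j * 0 ^ j)) (at 0)"
      unfolding g_def by (rule termdiffs_strong[OF sh2]) simp
    then show ?thesis by (rule DERIV_isCont)
  qed
  have g0: "g 0 = a n" unfolding g_def by (subst powser_zero) simp
  have gz: "g x = 0" if "0 < x" "x < 1" for x
  proof -
    have s: "(\<lambda>m. a m * x ^ m) sums 0" using S that by auto
    have "(\<lambda>j. a (j + n) * x ^ (j + n)) sums 0"
    proof -
      have "(\<lambda>j. a (j + n) * x ^ (j + n)) sums (0 - (\<Sum>m<n. a m * x ^ m))"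
        using sums_split_initial_segment[OF s, of n] by simp
      moreover have "(\<Sum>m<n. a m * x ^ m) = 0" using less by simp
      ultimately show ?thesis by simp
    qed
    then have "(\<lambda>j. x ^ n * (a (j + n) * x ^ j)) sums 0" by (simp add: power_add ac_simps)
    then have "(\<lambda>j. inverse (x ^ n) * (x ^ n * (a (j + n) * x ^ j))) sums (inverse (x^n) * 0)"
      by (rule sums_mult)
    moreover have "\<And>t. inverse (x ^ n) * (x ^ n * t) = t" using that by simp
    ultimately have "(\<lambda>j. a (j + n) * x ^ j) sums 0" by simp
    then show ?thesis unfolding g_def by (simp add: sums_iff)
  qed
  have "(g \<longlongrightarrow> g 0) (at_right 0)" using cont
    by (simp add: isCont_def filterlim_at_split)
  moreover have "(g \<longlongrightarrow> 0) (at_right 0)"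
  proof (rule tendsto_eventually)
    show "\<forall>\<^sub>F x in at_right 0. g x = 0"
      unfolding eventually_at_right[OF zero_less_one] using gz by (intro exI[of _ 1]) auto
  qed
  ultimately have "g 0 = 0" using tendsto_unique[OF trivial_limit_at_right_real] by blast
  then show ?case using g0 by simp
qed


definition rep :: "(real \<Rightarrow> real) \<Rightarrow> (nat \<Rightarrow> real) \<Rightarrow> bool" where
  "rep g c \<longleftrightarrow> (\<forall>n. 0 \<le> c n) \<and> (\<forall>x\<in>{0..1}. (\<lambda>n. c n * x ^ n) sums g x)"

lemma rep_unique: assumes "rep g c" "rep g d" shows "c = d"
proof
  fix n
  have "(\<lambda>n. c n - d n) n = 0"
  proof (rule powser_coeffs_zero)
    fix x :: real assume "0 < x" "x < 1"
    then have "(\<lambda>n. c n * x ^ n) sums g x" "(\<lambda>n. d n * x ^ n) sums g x"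
      using assms unfolding rep_def by auto
    from sums_diff[OF this] show "(\<lambda>n. (c n - d n) * x ^ n) sums 0"
      by (simp add: left_diff_distrib)
  qed
  then show "c n = d n" by simp
qed

lemma ps_coeffs_eq: assumes "rep g c" shows "ps_coeffs g = c"
proof -
  have "rep g (ps_coeffs g)"
    unfolding ps_coeffs_def rep_def[symmetric] by (rule someI[of "rep g", OF assms])
  then show ?thesis using rep_unique assms by blast
qed

definition DD :: "(nat \<Rightarrow> real) \<Rightarrow> real \<Rightarrow> ennreal" where
  "DD c x = (\<Sum>n. ennreal (real (Suc n) * c (Suc n) * x ^ n))"

lemma ps_deriv_eq: "rep g c \<Longrightarrow> ps_deriv g x = DD c x"
  by (simp add: ps_deriv_def DD_def ps_coeffs_eq)

lemma num_snoc: "num (w @ [b]) = 2 * num w + (if b then 1 else 0)"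
  by (simp add: num_def)

lemma num_inj: "length u = length v \<Longrightarrow> num u = num v \<Longrightarrow> u = v"
proof (induction u arbitrary: v rule: rev_induct)
  case Nil then show ?case by simp
next
  case (snoc b u)
  then obtain v' c where v: "v = v' @ [c]" by (cases v rule: rev_cases) auto
  with snoc.prems have "2 * num u + (if b then 1 else 0) = 2 * num v' + (if c then 1 else 0)"
    by (simp add: num_snoc)
  then have "num u = num v'" "b = c" by (auto split: if_splits; presburger)+
  with snoc v show ?case by auto
qed

lemma fin_len: "finite {v :: bool list. length v = n \<and> P v}"
  by (rule finite_subset[OF _ finite_lists_length_eq[of "UNIV::bool set" n]]) auto

lemma yw_snoc:
  "yw p (w @ [b]) = yw p w + (if b then (1 - p w) * delta p w else 0)"
proof -
  let ?A = "{u. length u = length w \<and> num u < num w}"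
  define A0 where "A0 = {u. length u = length w \<and> num (u @ [False]) < num (w @ [b])}"
  define A1 where "A1 = {u. length u = length w \<and> num (u @ [True]) < num (w @ [b])}"
  have S: "{v. length v = length (w @ [b]) \<and> num v < num (w @ [b])}
      = (\<lambda>u. u @ [False]) ` A0 \<union> (\<lambda>u. u @ [True]) ` A1"
  proof (intro equalityI subsetI)
    fix v assume "v \<in> {v. length v = length (w @ [b]) \<and> num v < num (w @ [b])}"
    then have v: "length v = Suc (length w)" "num v < num (w @ [b])" by auto
    then obtain u c where "v = u @ [c]" by (cases v rule: rev_cases) auto
    with v show "v \<in> (\<lambda>u. u @ [False]) ` A0 \<union> (\<lambda>u. u @ [True]) ` A1"
      unfolding A0_def A1_def by (cases c) auto
  qed (auto simp: A0_def A1_def)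
  have fA0: "finite A0" "finite A1" unfolding A0_def A1_def by (rule fin_len)+
  have disj: "(\<lambda>u. u @ [False]) ` A0 \<inter> (\<lambda>u. u @ [True]) ` A1 = {}" by auto
  have "yw p (w @ [b]) = (\<Sum>u\<in>A0. delta p (u @ [False])) + (\<Sum>u\<in>A1. delta p (u @ [True]))"
    unfolding yw_def S
    by (subst sum.union_disjoint) (auto simp: fA0 disj sum.reindex inj_on_def)
  also have "\<dots> = (\<Sum>u\<in>A0. (1 - p u) * delta p u) + (\<Sum>u\<in>A1. p u * delta p u)"
    by (simp add: delta_snoc0 delta_snoc1)
  finally have e: "yw p (w @ [b]) = (\<Sum>u\<in>A0. (1 - p u) * delta p u) + (\<Sum>u\<in>A1. p u * delta p u)" .
  have A1: "A1 = ?A" unfolding A1_def by (auto simp: num_snoc)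
  have cmb: "(\<Sum>u\<in>?A. (1 - p u) * delta p u) + (\<Sum>u\<in>?A. p u * delta p u) = (\<Sum>u\<in>?A. delta p u)"
    by (subst sum.distrib[symmetric]) (simp add: algebra_simps)
  show ?thesis
  proof (cases b)
    case False
    then have "A0 = ?A" unfolding A0_def by (auto simp: num_snoc)
    with e A1 False cmb show ?thesis
      by (simp add: yw_def)
  next
    case True
    have "A0 = insert w ?A" unfolding A0_def using True
      by (auto simp: num_snoc intro: num_inj)
    moreover have "w \<notin> ?A" by simp
    moreover have "finite ?A" by (rule fin_len)
    ultimately have "(\<Sum>u\<in>A0. (1 - p u) * delta p u) = (1 - p w) * delta p w + (\<Sum>u\<in>?A. (1 - p u) * delta p u)"
      by simp
    with e A1 True cmb show ?thesis
      unfolding yw_def by (simp only: if_True)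
  qed
qed

lemma yw_Nil: "yw p [] = 0" by (simp add: yw_def num_def)


lemma binom_inner:
  fixes a b K :: real
  assumes "0 \<le> a" "0 \<le> b" "0 \<le> K"
  shows "(\<Sum>j. ennreal (K * (real (n choose j) * a ^ j * b ^ (n - j)))) = ennreal (K * (a + b) ^ n)"
proof -
  have "(\<Sum>j. ennreal (K * (real (n choose j) * a ^ j * b ^ (n - j))))
      = (\<Sum>j\<le>n. ennreal (K * (real (n choose j) * a ^ j * b ^ (n - j))))"
    by (rule suminf_finite) (auto simp: not_le binomial_eq_0)
  also have "\<dots> = ennreal (\<Sum>j\<le>n. K * (real (n choose j) * a ^ j * b ^ (n - j)))"
    using assms by (intro sum_ennreal) auto
  also have "(\<Sum>j\<le>n. K * (real (n choose j) * a ^ j * b ^ (n - j))) = K * (a + b) ^ n"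
    by (simp add: binomial_ring sum_distrib_left)
  finally show ?thesis .
qed

lemma rep_nonneg: "rep g c \<Longrightarrow> y \<in> {0..1} \<Longrightarrow> 0 \<le> g y"
proof -
  assume r: "rep g c" and y: "y \<in> {0..1}"
  then have s: "(\<lambda>n. c n * y ^ n) sums g y" and "\<And>n. 0 \<le> c n" by (auto simp: rep_def)
  then have "\<And>n. 0 \<le> c n * y ^ n" using y by simp
  then show ?thesis using sums_le[OF _ sums_zero s] by simp
qed

lemma step0:
  assumes r: "rep g c" and P: "0 \<le> P" "P \<le> 1"
  shows "rep (\<lambda>x. g ((1 - P) * x)) (\<lambda>n. c n * (1 - P) ^ n)
    \<and> (\<forall>x\<in>{0..1}. DD (\<lambda>n. c n * (1 - P) ^ n) x = ennreal (1 - P) * DD c ((1 - P) * x))"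
proof
  have c0: "\<And>n. 0 \<le> c n" using r by (simp add: rep_def)
  show "rep (\<lambda>x. g ((1 - P) * x)) (\<lambda>n. c n * (1 - P) ^ n)"
    unfolding rep_def
  proof safe
    fix n show "0 \<le> c n * (1 - P) ^ n" using c0 P by simp
  next
    fix x :: real assume x: "x \<in> {0..1}"
    then have "(1 - P) * x \<in> {0..1}" using P by (auto simp: mult_le_one)
    then have "(\<lambda>n. c n * ((1 - P) * x) ^ n) sums g ((1 - P) * x)" using r by (simp add: rep_def)
    then show "(\<lambda>n. c n * (1 - P) ^ n * x ^ n) sums g ((1 - P) * x)"
      by (simp add: power_mult_distrib mult.assoc)
  qed
  show "\<forall>x\<in>{0..1}. DD (\<lambda>n. c n * (1 - P) ^ n) x = ennreal (1 - P) * DD c ((1 - P) * x)"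
  proof
    fix x :: real assume x: "x \<in> {0..1}"
    have "DD (\<lambda>n. c n * (1 - P) ^ n) x = (\<Sum>n. ennreal (1 - P) * ennreal (real (Suc n) * c (Suc n) * ((1 - P) * x) ^ n))"
      unfolding DD_def
    proof (rule suminf_cong)
      fix n
      have eq: "real (Suc n) * (c (Suc n) * (1 - P) ^ Suc n) * x ^ n
          = (1 - P) * (real (Suc n) * c (Suc n) * ((1 - P) * x) ^ n)"
        by (simp add: power_mult_distrib)
      show "ennreal (real (Suc n) * (c (Suc n) * (1 - P) ^ Suc n) * x ^ n)
          = ennreal (1 - P) * ennreal (real (Suc n) * c (Suc n) * ((1 - P) * x) ^ n)"
        unfolding eq by (rule ennreal_mult) (use P x c0 in auto)
    qed
    also have "\<dots> = ennreal (1 - P) * DD c ((1 - P) * x)"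
      by (simp add: DD_def)
    finally show "DD (\<lambda>n. c n * (1 - P) ^ n) x = ennreal (1 - P) * DD c ((1 - P) * x)" .
  qed
qed


lemma inrange: "0 \<le> P \<Longrightarrow> P \<le> 1 \<Longrightarrow> t \<in> {0..1} \<Longrightarrow> P * t + (1 - P) \<in> {0..(1::real)}"
  using mult_left_le[of t P] mult_nonneg_nonneg[of P t] by auto

lemma step1:
  assumes r: "rep g c" and P: "0 \<le> P" "P \<le> 1"
  shows "\<exists>d. rep (\<lambda>x. g (P * x + 1 - P) - g (1 - P)) d
    \<and> (\<forall>x\<in>{0..1}. DD d x = ennreal P * DD c (P * x + 1 - P))"
proof -
  define s where "s = 1 - P"
  have s0: "0 \<le> s" "s \<le> 1" using P by (auto simp: s_def)
  have c0: "\<And>n. 0 \<le> c n" using r by (simp add: rep_def)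
  define E where "E j = (\<Sum>n. ennreal (c n * real (n choose j) * P ^ j * s ^ (n - j)))" for j
  have claim1: "(\<Sum>j. E j * ennreal (t ^ j)) = ennreal (g (P * t + s))" if t: "t \<in> {0..1}" for t
  proof -
    have "(\<Sum>j. E j * ennreal (t ^ j))
        = (\<Sum>j. \<Sum>n. ennreal (c n * (real (n choose j) * (P * t) ^ j * s ^ (n - j))))"
      unfolding E_def ennreal_suminf_multc[symmetric]
    proof (intro suminf_cong)
      fix j n
      have eq: "c n * (real (n choose j) * (P * t) ^ j * s ^ (n - j))
          = (c n * real (n choose j) * P ^ j * s ^ (n - j)) * t ^ j"
        by (simp add: power_mult_distrib)
      show "ennreal (c n * real (n choose j) * P ^ j * s ^ (n - j)) * ennreal (t ^ j) =
          ennreal (c n * (real (n choose j) * (P * t) ^ j * s ^ (n - j)))"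
        unfolding eq by (rule ennreal_mult[symmetric]) (use P t s0 c0 in auto)
    qed
    also have "\<dots> = (\<Sum>n. \<Sum>j. ennreal (c n * (real (n choose j) * (P * t) ^ j * s ^ (n - j))))"
      by (rule enn_swap[symmetric])
    also have "\<dots> = (\<Sum>n. ennreal (c n * (P * t + s) ^ n))"
      by (intro suminf_cong binom_inner) (use P t s0 c0 in auto)
    also have "\<dots> = ennreal (g (P * t + s))"
    proof (rule suminf_ennreal_eq)
      show "\<And>n. 0 \<le> c n * (P * t + s) ^ n" using P t s0 c0 by simp
      have "P * t + s \<in> {0..1}" using inrange[OF P t] unfolding s_def .
      then show "(\<lambda>n. c n * (P * t + s) ^ n) sums g (P * t + s)" using r by (simp add: rep_def)
    qed
    finally show ?thesis .
  qed
  have E0: "E 0 = ennreal (g s)"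
  proof -
    have "(\<Sum>j. E j * ennreal (0 ^ j)) = E 0" by (subst enn_suminf_head) simp
    then show ?thesis using claim1[of 0] by simp
  qed
  have Efin: "E j < top" for j
  proof -
    have "(\<Sum>j. E j) = ennreal (g (P * 1 + s))" using claim1[of 1] by simp
    then have "(\<Sum>j. E j) < top" by simp
    then show ?thesis by (rule ennreal_suminf_lessD)
  qed
  define d where "d j = (if j = 0 then 0 else enn2real (E j))" for j
  have d0: "0 \<le> d j" for j by (simp add: d_def)
  have dz: "d 0 = 0" by (simp add: d_def)
  have dE: "ennreal (d (Suc j) * y) = E (Suc j) * ennreal y" if "0 \<le> y" for j y
  proof -
    have "ennreal (d (Suc j) * y) = ennreal (enn2real (E (Suc j))) * ennreal y"
      using that by (simp add: d_def ennreal_mult)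
    also have "\<dots> = E (Suc j) * ennreal y" using Efin[of "Suc j"] by simp
    finally show ?thesis .
  qed
  have gnn: "0 \<le> g y" if "y \<in> {0..1}" for y using rep_nonneg[OF r that] .
  have rep1: "rep (\<lambda>x. g (P * x + 1 - P) - g (1 - P)) d"
    unfolding rep_def
  proof (intro conjI allI ballI d0)
    fix x :: real assume x: "x \<in> {0..1}"
    define T where "T = (\<Sum>j. ennreal (d j * x ^ j))"
    have T2: "T = (\<Sum>j. E (Suc j) * ennreal (x ^ Suc j))"
      unfolding T_def by (subst enn_suminf_head) (use x in \<open>simp add: dz dE del: power_Suc\<close>)
    have "ennreal (g (P * x + s)) = E 0 * ennreal (x ^ 0) + (\<Sum>j. E (Suc j) * ennreal (x ^ Suc j))"
      using claim1[OF x] enn_suminf_head[of "\<lambda>j. E j * ennreal (x ^ j)"] by simp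
    then have eq: "ennreal (g (P * x + s)) = ennreal (g s) + T" using E0 T2 by simp
    have inr: "P * x + s \<in> {0..1}" using inrange[OF P x] unfolding s_def .
    have "T \<noteq> top"
    proof
      assume "T = top"
      with eq have "ennreal (g (P * x + s)) = top" by simp
      then show False by simp
    qed
    then obtain t where t: "T = ennreal t" "0 \<le> t" by (cases T rule: ennreal_cases) auto
    have "ennreal (g (P * x + s)) = ennreal (g s + t)" using eq t gnn[of s] s0 by (simp add: ennreal_plus)
    then have "g (P * x + s) = g s + t" by (subst (asm) ennreal_inj) (use gnn[OF inr] gnn[of s] s0 t in auto)
    then have tv: "t = g (P * x + 1 - P) - g (1 - P)" by (simp add: s_def algebra_simps)
    have "(\<lambda>j. ennreal (d j * x ^ j)) sums T" unfolding T_def by (rule summable_sums[OF summableI])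
    then have "(\<lambda>j. ennreal (d j * x ^ j)) sums ennreal t" using t by simp
    then show "(\<lambda>j. d j * x ^ j) sums (g (P * x + 1 - P) - g (1 - P))"
      using sums_ennreal[of "\<lambda>j. d j * x ^ j" t] d0 x t tv by simp
  qed
  have der: "DD d x = ennreal P * DD c (P * x + 1 - P)" if x: "x \<in> {0..1}" for x
  proof -
    define F where "F n j = ennreal (real (Suc j) * c n * real (n choose Suc j) * P ^ Suc j * s ^ (n - Suc j) * x ^ j)" for n j
    have "DD d x = (\<Sum>j. \<Sum>n. F n j)"
      unfolding DD_def
    proof (rule suminf_cong)
      fix j
      have "ennreal (real (Suc j) * d (Suc j) * x ^ j) = E (Suc j) * ennreal (real (Suc j) * x ^ j)"
        using dE[of "real (Suc j) * x ^ j" j] x by (simp add: ac_simps)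
      also have "\<dots> = (\<Sum>n. F n j)"
        unfolding E_def ennreal_suminf_multc[symmetric]
      proof (rule suminf_cong)
        fix n
        have eq: "real (Suc j) * c n * real (n choose Suc j) * P ^ Suc j * s ^ (n - Suc j) * x ^ j
          = (c n * real (n choose Suc j) * P ^ Suc j * s ^ (n - Suc j)) * (real (Suc j) * x ^ j)"
          by (simp add: ac_simps)
        show "ennreal (c n * real (n choose Suc j) * P ^ Suc j * s ^ (n - Suc j)) * ennreal (real (Suc j) * x ^ j) = F n j"
          unfolding F_def eq by (rule ennreal_mult[symmetric]) (use P x s0 c0 in auto)
      qed
      finally show "ennreal (real (Suc j) * d (Suc j) * x ^ j) = (\<Sum>n. F n j)" .
    qed
    also have "\<dots> = (\<Sum>n. \<Sum>j. F n j)" by (rule enn_swap[symmetric])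
    also have "\<dots> = (\<Sum>m. \<Sum>j. F (Suc m) j)"
    proof -
      have F0: "F 0 = (\<lambda>j. 0)" by (simp add: F_def fun_eq_iff)
      show ?thesis by (subst enn_suminf_head) (simp add: F0)
    qed
    also have "\<dots> = (\<Sum>m. ennreal ((P * (real (Suc m) * c (Suc m))) * (P * x + s) ^ m))"
    proof (rule suminf_cong)
      fix m
      have "(\<Sum>j. F (Suc m) j) = (\<Sum>j. ennreal ((P * (real (Suc m) * c (Suc m))) * (real (m choose j) * (P * x) ^ j * s ^ (m - j))))"
      proof (rule suminf_cong)
        fix j
        have b: "real (Suc j) * real (Suc m choose Suc j) = real (Suc m) * real (m choose j)"
          using Suc_times_binomial[of j m] by (metis of_nat_mult)
        have "real (Suc j) * c (Suc m) * real (Suc m choose Suc j) * P ^ Suc j * s ^ (Suc m - Suc j) * x ^ j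
          = (real (Suc j) * real (Suc m choose Suc j)) * c (Suc m) * P ^ Suc j * s ^ (m - j) * x ^ j"
          by simp
        also have "\<dots> = P * (real (Suc m) * c (Suc m)) * (real (m choose j) * (P * x) ^ j * s ^ (m - j))"
          unfolding b by (simp add: power_mult_distrib ac_simps)
        finally show "F (Suc m) j = ennreal (P * (real (Suc m) * c (Suc m)) * (real (m choose j) * (P * x) ^ j * s ^ (m - j)))"
          unfolding F_def by (rule arg_cong[where f=ennreal])
      qed
      also have "\<dots> = ennreal ((P * (real (Suc m) * c (Suc m))) * (P * x + s) ^ m)"
        by (rule binom_inner) (use P x s0 c0 in auto)
      finally show "(\<Sum>j. F (Suc m) j) = ennreal ((P * (real (Suc m) * c (Suc m))) * (P * x + s) ^ m)" .
    qed
    also have "\<dots> = (\<Sum>m. ennreal P * ennreal (real (Suc m) * c (Suc m) * (P * x + 1 - P) ^ m))"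
    proof (rule suminf_cong)
      fix m
      have eq: "P * (real (Suc m) * c (Suc m)) * (P * x + s) ^ m = P * (real (Suc m) * c (Suc m) * (P * x + 1 - P) ^ m)"
        by (simp add: s_def algebra_simps)
      have nn: "0 \<le> P * x + 1 - P" using inrange[OF P x] by simp
      show "ennreal (P * (real (Suc m) * c (Suc m)) * (P * x + s) ^ m) = ennreal P * ennreal (real (Suc m) * c (Suc m) * (P * x + 1 - P) ^ m)"
        unfolding eq by (rule ennreal_mult) (use P c0 nn in auto)
    qed
    also have "\<dots> = ennreal P * DD c (P * x + 1 - P)" by (simp add: DD_def)
    finally show ?thesis .
  qed
  show ?thesis using rep1 der by blast
qed


theorem lemma2:
  fixes q :: "nat \<Rightarrow> real" and p :: "bool list \<Rightarrow> real" and k :: nat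
  assumes "q 0 = 0" and "\<forall>n. 0 \<le> q n" and "q sums 1"
    and "k \<ge> 1"
    and "\<forall>w. length w \<le> k - 1 \<longrightarrow> 0 \<le> p w \<and> p w \<le> 1"
  defines "f \<equiv> (\<lambda>x. \<Sum>n. q n * x ^ n)"
  shows "\<forall>w x. length w \<le> k \<and> x \<in> {0..1} \<longrightarrow>
           ps_deriv (fw f p w) x = ennreal (delta p w) * ps_deriv f (yw p w + delta p w * x)"
proof -
  have q0: "\<And>n. 0 \<le> q n" using assms(2) by simp
  have rf: "rep f q"
    unfolding rep_def
  proof (intro conjI allI ballI q0)
    fix x :: real assume x: "x \<in> {0..1}"
    have "summable (\<lambda>n. q n * x ^ n)"
    proof (rule summable_comparison_test)
      show "\<exists>N. \<forall>n\<ge>N. norm (q n * x ^ n) \<le> q n"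
        using x q0 by (intro exI[of _ 0]) (auto simp: abs_mult power_le_one mult_left_le)
      show "summable q" using assms(3) by (rule sums_summable)
    qed
    then show "(\<lambda>n. q n * x ^ n) sums f x" unfolding f_def by (rule summable_sums)
  qed
  have main: "length w \<le> k \<longrightarrow> (\<exists>c. rep (fw f p w) c \<and> 0 \<le> delta p w \<and>
      (\<forall>x\<in>{0..1}. DD c x = ennreal (delta p w) * DD q (yw p w + delta p w * x)))" for w
  proof (induction w rule: rev_induct)
    case Nil
    show ?case using rf by (auto simp: fw_Nil delta_Nil yw_Nil)
  next
    case (snoc b w)
    show ?case
    proof
      assume len: "length (w @ [b]) \<le> k"
      then obtain c where c: "rep (fw f p w) c" "0 \<le> delta p w"
        "\<And>x. x \<in> {0..1} \<Longrightarrow> DD c x = ennreal (delta p w) * DD q (yw p w + delta p w * x)"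
        using snoc by auto
      have P: "0 \<le> p w" "p w \<le> 1" using assms(5) len by auto
      show "\<exists>c. rep (fw f p (w @ [b])) c \<and> 0 \<le> delta p (w @ [b]) \<and>
        (\<forall>x\<in>{0..1}. DD c x = ennreal (delta p (w @ [b])) * DD q (yw p (w @ [b]) + delta p (w @ [b]) * x))"
      proof (cases b)
        case False
        have st: "rep (\<lambda>x. fw f p w ((1 - p w) * x)) (\<lambda>n. c n * (1 - p w) ^ n)
          \<and> (\<forall>x\<in>{0..1}. DD (\<lambda>n. c n * (1 - p w) ^ n) x = ennreal (1 - p w) * DD c ((1 - p w) * x))"
          by (rule step0[OF c(1) P])
        show ?thesis
        proof (intro exI conjI ballI)
          show "rep (fw f p (w @ [b])) (\<lambda>n. c n * (1 - p w) ^ n)"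
            using st False by (simp add: fw_snoc0)
          show "0 \<le> delta p (w @ [b])" using False c(2) P by (simp add: delta_snoc0)
          fix x :: real assume x: "x \<in> {0..1}"
          have x': "(1 - p w) * x \<in> {0..1}" using x P by (auto simp: mult_le_one)
          have "DD (\<lambda>n. c n * (1 - p w) ^ n) x = ennreal (1 - p w) * (ennreal (delta p w) * DD q (yw p w + delta p w * ((1 - p w) * x)))"
            using st x c(3)[OF x'] by simp
          also have "\<dots> = ennreal ((1 - p w) * delta p w) * DD q (yw p w + delta p w * ((1 - p w) * x))"
            using P c(2) by (simp add: ennreal_mult mult.assoc)
          also have "\<dots> = ennreal (delta p (w @ [b])) * DD q (yw p (w @ [b]) + delta p (w @ [b]) * x)"
            using False by (simp add: delta_snoc0 yw_snoc ac_simps)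
          finally show "DD (\<lambda>n. c n * (1 - p w) ^ n) x = ennreal (delta p (w @ [b])) * DD q (yw p (w @ [b]) + delta p (w @ [b]) * x)" .
        qed
      next
        case True
        obtain d where d: "rep (\<lambda>x. fw f p w (p w * x + 1 - p w) - fw f p w (1 - p w)) d"
          "\<And>x. x \<in> {0..1} \<Longrightarrow> DD d x = ennreal (p w) * DD c (p w * x + 1 - p w)"
          using step1[OF c(1) P] by blast
        show ?thesis
        proof (intro exI conjI ballI)
          show "rep (fw f p (w @ [b])) d"
            using d(1) True by (simp add: fw_snoc1)
          show "0 \<le> delta p (w @ [b])" using True c(2) P by (simp add: delta_snoc1)
          fix x :: real assume x: "x \<in> {0..1}"
          have x': "p w * x + 1 - p w \<in> {0..1}" using inrange[OF P x] by simp
          have "DD d x = ennreal (p w) * (ennreal (delta p w) * DD q (yw p w + delta p w * (p w * x + 1 - p w)))"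
            using d(2)[OF x] c(3)[OF x'] by simp
          also have "\<dots> = ennreal (p w * delta p w) * DD q (yw p w + delta p w * (p w * x + 1 - p w))"
            using P c(2) by (simp add: ennreal_mult mult.assoc)
          also have "yw p w + delta p w * (p w * x + 1 - p w) = yw p (w @ [b]) + delta p (w @ [b]) * x"
            using True by (simp add: delta_snoc1 yw_snoc algebra_simps)
          also have "p w * delta p w = delta p (w @ [b])"
            using True by (simp add: delta_snoc1)
          finally show "DD d x = ennreal (delta p (w @ [b])) * DD q (yw p (w @ [b]) + delta p (w @ [b]) * x)" .
        qed
      qed
    qed
  qed
  show ?thesis
  proof (intro allI impI)
    fix w :: "bool list" and x :: real assume a: "length w \<le> k \<and> x \<in> {0..1}"
    then obtain c where c: "rep (fw f p w) c"
      "DD c x = ennreal (delta p w) * DD q (yw p w + delta p w * x)"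
      using main[of w] by auto
    show "ps_deriv (fw f p w) x = ennreal (delta p w) * ps_deriv f (yw p w + delta p w * x)"
      using c by (simp add: ps_deriv_eq[OF c(1)] ps_deriv_eq[OF rf])
  qed
qed

end
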